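(* Let $\alpha>0$, $\sigma>0$, and let $U,V$ be the continuous linear operators on $\mathcal E^1_{\min}(\mathbb C)$ described in the context. Then, as continuous linear operators on $\mathcal E^1_{\min}(\mathbb C)$, $$U=Z\,E_{-\alpha},\qquad V=E_\alpha,$$ i.e. $(Uf)(z)=zf(z-\alpha)$ and $(Vf)(z)=f(z+\alpha)$ for all $f\in\mathcal E^1_{\min}(\mathbb C)$, $z\in\mathbb C$.
   Context: $\mathcal E^1_{\min}(\mathbb C)$ is the Fréchet space of entire functions $f$ with $\sup_{z\in\mathbb C}|f(z)|e^{-|z|/n}<\infty$ for all $n\in\mathbb N$, topologized by these norms. Let $\pi_{\alpha,\sigma}=\exp(-\sigma/\alpha^2)\sum_{n\ge0}\frac{1}{n!}(\sigma/\alpha^2)^n\delta_{\alpha n}$ on $\alpha\mathbb N_0$ and let $(c_n)_{n\ge0}$ be the monic polynomials orthogonal with respect to it, with generating function $\sum_{n\ge0}\frac{t^n}{n!}c_n(z)=\exp\big(\frac z\alpha\log(1+t\alpha)-\frac{\sigma t}{\alpha}\big)$. Let $\mathcal S$ be the linear bijection of $\mathbb C[z]$ with $\mathcal Sc_n=z^n$. Let $Z$ be multiplication by $z$, $D$ differentiation, and $E_h$ the shift $(E_hf)(z)=f(z+h)$. Define on $\mathbb C[z]$ the operators $\mathcal U=Z+\sigma/\alpha$, $\mathcal V=\alpha D+1$, and $U=\mathcal S^{-1}\mathcal U\mathcal S$, $V=\mathcal S^{-1}\mathcal V\mathcal S$; equivalently $U=\partial^++\sigma/\alpha$ and $V=\alpha\partial^-+1$,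 where $\partial^+c_n=c_{n+1}$ and $\partial^-c_n=nc_{n-1}$. The operators $U$, $V$, $Z$ and $E_h$ ($h\in\mathbb C$) extend uniquely to continuous linear operators on $\mathcal E^1_{\min}(\mathbb C)$, denoted by the same symbols. *)

theory Defs
  imports "HOL-Analysis.Analysis"
begin

definition Emin :: "(complex \<Rightarrow> complex) set" where
  "Emin = {f. f holomorphic_on UNIV \<and>
              (\<forall>n::nat. n \<ge> 1 \<longrightarrow> bdd_above (range (\<lambda>z. norm (f z) * exp (- norm z / real n))))}"

definition Emin_norm :: "nat \<Rightarrow> (complex \<Rightarrow> complex) \<Rightarrow> real" where
  "Emin_norm n f = (SUP z. norm (f z) * exp (- norm z / real n))"

text \<open>Continuous linear operators on E^1_min (continuity for the locally convex topology
  given by the seminorms Emin_norm n, n \<ge> 1).\<close>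
definition Emin_cont_linear :: "((complex \<Rightarrow> complex) \<Rightarrow> (complex \<Rightarrow> complex)) \<Rightarrow> bool" where
  "Emin_cont_linear T \<longleftrightarrow>
     (\<forall>f\<in>Emin. T f \<in> Emin) \<and>
     (\<forall>f\<in>Emin. \<forall>g\<in>Emin. T (\<lambda>z. f z + g z) = (\<lambda>z. T f z + T g z)) \<and>
     (\<forall>f\<in>Emin. \<forall>c. T (\<lambda>z. c * f z) = (\<lambda>z. c * T f z)) \<and>
     (\<forall>n::nat. n \<ge> 1 \<longrightarrow> (\<exists>m::nat. \<exists>C::real. m \<ge> 1 \<and>
         (\<forall>f\<in>Emin. Emin_norm n (T f) \<le> C * Emin_norm m f)))"

text \<open>The polynomials c_n, via their generating function:
  sum_n t^n/n! c_n(z) = exp((z/alpha) log(1 + t alpha) - sigma t / alpha),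
  i.e. c_n(z) is the n-th derivative in t at t = 0.\<close>
definition charlier :: "real \<Rightarrow> real \<Rightarrow> nat \<Rightarrow> complex \<Rightarrow> complex" where
  "charlier \<alpha> \<sigma> n z =
     ((deriv ^^ n) (\<lambda>t. exp (z / of_real \<alpha> * Ln (1 + t * of_real \<alpha>) - of_real \<sigma> * t / of_real \<alpha>))) 0"

end

theory Submission
  imports Defs "HOL-Complex_Analysis.Complex_Analysis"
begin


definition GF :: "real \<Rightarrow> real \<Rightarrow> complex \<Rightarrow> complex \<Rightarrow> complex" where
  "GF \<alpha> \<sigma> z = (\<lambda>t. exp (z / of_real \<alpha> * Ln (1 + t * of_real \<alpha>) - of_real \<sigma> * t / of_real \<alpha>))"

lemma charlier_GF: "charlier \<alpha> \<sigma> n z = (deriv ^^ n) (GF \<alpha> \<sigma> z) 0"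
  unfolding charlier_def GF_def by simp

lemma ball_Re_pos:
  fixes \<alpha> :: real and t :: complex
  assumes "\<alpha> > 0" "t \<in> ball 0 (1/\<alpha>)"
  shows "Re (1 + t * of_real \<alpha>) > 0"
proof -
  have "norm t < 1/\<alpha>" using assms by auto
  hence "\<alpha> * norm t < 1" using assms by (simp add: field_simps)
  moreover have "- Re t \<le> norm t" using abs_Re_le_cmod[of t] by linarith
  hence "\<alpha> * (- Re t) \<le> \<alpha> * norm t" using assms(1) by (intro mult_left_mono) auto
  ultimately have "\<alpha> * Re t > -1" by linarith
  thus ?thesis by (simp add: mult.commute)
qed

lemma ball_nonpos:
  fixes \<alpha> :: real and t :: complex
  assumes "\<alpha> > 0" "t \<in> ball 0 (1/\<alpha>)"
  shows "1 + t * of_real \<alpha> \<notin> \<real>\<^sub>\<le>\<^sub>0" "1 + t * of_real \<alpha> \<noteq> 0"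
proof -
  have r: "Re (1 + t * of_real \<alpha>) > 0" using ball_Re_pos[OF assms] .
  thus "1 + t * of_real \<alpha> \<notin> \<real>\<^sub>\<le>\<^sub>0" by (auto simp: complex_nonpos_Reals_iff)
  show "1 + t * of_real \<alpha> \<noteq> 0"
  proof
    assume "1 + t * of_real \<alpha> = 0"
    hence "Re (1 + t * of_real \<alpha>) = 0" by simp
    thus False using r by simp
  qed
qed

lemma GF_hol:
  assumes "\<alpha> > 0"
  shows "GF \<alpha> \<sigma> z holomorphic_on ball 0 (1/\<alpha>)"
  unfolding GF_def
  using assms by (auto intro!: holomorphic_intros ball_nonpos[OF assms])

lemma charlier_0: "charlier \<alpha> \<sigma> 0 z = 1"
  by (simp add: charlier_def)


lemma GF_shift:
  fixes \<alpha> :: real and t :: complex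
  assumes "\<alpha> > 0" "t \<in> ball 0 (1/\<alpha>)"
  shows "GF \<alpha> \<sigma> (z + of_real \<alpha>) t = GF \<alpha> \<sigma> z t + of_real \<alpha> * (t * GF \<alpha> \<sigma> z t)"
proof -
  define L where "L = Ln (1 + t * of_real \<alpha>)"
  have a0: "(of_real \<alpha> :: complex) \<noteq> 0" using assms by simp
  have "(z + of_real \<alpha>) / of_real \<alpha> * L - of_real \<sigma> * t / of_real \<alpha>
        = (z / of_real \<alpha> * L - of_real \<sigma> * t / of_real \<alpha>) + L"
    using a0 by (simp add: field_simps)
  hence "GF \<alpha> \<sigma> (z + of_real \<alpha>) t = exp ((z / of_real \<alpha> * L - of_real \<sigma> * t / of_real \<alpha>) + L)"
    unfolding GF_def L_def[symmetric] by (simp only:)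
  also have "\<dots> = GF \<alpha> \<sigma> z t * exp L" unfolding GF_def L_def by (simp only: exp_add)
  finally have "GF \<alpha> \<sigma> (z + of_real \<alpha>) t = GF \<alpha> \<sigma> z t * exp L" .
  also have "exp L = 1 + t * of_real \<alpha>" unfolding L_def
    using ball_nonpos(2)[OF assms] by simp
  finally show ?thesis by (simp add: algebra_simps)
qed

lemma higher_deriv_times_ident:
  fixes g :: "complex \<Rightarrow> complex"
  assumes "g holomorphic_on S" "open S" "0 \<in> S"
  shows "(deriv ^^ n) (\<lambda>t. t * g t) 0 = of_nat n * (deriv ^^ (n - 1)) g 0"
proof -
  have "(deriv ^^ n) (\<lambda>t. t * g t) 0 =
     (\<Sum>i = 0..n. of_nat (n choose i) * (deriv ^^ i) (\<lambda>w. w) 0 * (deriv ^^ (n-i)) g 0)"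
    by (rule higher_deriv_mult[OF _ assms(1) assms(2) assms(3)]) (auto intro: holomorphic_intros)
  also have "\<dots> = (\<Sum>i = 0..n. if i = 1 then of_nat n * (deriv ^^ (n - 1)) g 0 else 0)"
    by (intro sum.cong) auto
  also have "\<dots> = of_nat n * (deriv ^^ (n - 1)) g 0"
    by (cases n) auto
  finally show ?thesis .
qed

lemma charlier_shift:
  assumes "\<alpha> > 0"
  shows "charlier \<alpha> \<sigma> n (z + of_real \<alpha>) =
     of_real \<alpha> * of_nat n * charlier \<alpha> \<sigma> (n - 1) z + charlier \<alpha> \<sigma> n z"
proof -
  let ?S = "ball (0::complex) (1/\<alpha>)"
  have o: "open ?S" and z0: "0 \<in> ?S" using assms by auto
  have h: "GF \<alpha> \<sigma> z holomorphic_on ?S" by (rule GF_hol[OF assms])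
  have h2: "(\<lambda>t. t * GF \<alpha> \<sigma> z t) holomorphic_on ?S" by (intro holomorphic_intros h)
  have "(deriv ^^ n) (GF \<alpha> \<sigma> (z + of_real \<alpha>)) 0 =
        (deriv ^^ n) (\<lambda>t. GF \<alpha> \<sigma> z t + of_real \<alpha> * (t * GF \<alpha> \<sigma> z t)) 0"
    by (rule higher_deriv_transform_within_open[OF GF_hol[OF assms] _ o z0])
       (auto intro!: holomorphic_intros h GF_shift[OF assms])
  also have "\<dots> = (deriv ^^ n) (GF \<alpha> \<sigma> z) 0 + (deriv ^^ n) (\<lambda>t. of_real \<alpha> * (t * GF \<alpha> \<sigma> z t)) 0"
    by (rule higher_deriv_add[OF h _ o z0]) (intro holomorphic_intros h)
  also have "(deriv ^^ n) (\<lambda>t. of_real \<alpha> * (t * GF \<alpha> \<sigma> z t)) 0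
      = of_real \<alpha> * (deriv ^^ n) (\<lambda>t. t * GF \<alpha> \<sigma> z t) 0"
    by (rule higher_deriv_cmult[OF h2 z0 o])
  also have "(deriv ^^ n) (\<lambda>t. t * GF \<alpha> \<sigma> z t) 0 = of_nat n * (deriv ^^ (n - 1)) (GF \<alpha> \<sigma> z) 0"
    by (rule higher_deriv_times_ident[OF h o z0])
  finally show ?thesis unfolding charlier_GF by (simp add: algebra_simps)
qed

lemma GF_deriv:
  fixes \<alpha> :: real and t :: complex
  assumes "\<alpha> > 0" "t \<in> ball 0 (1/\<alpha>)"
  shows "deriv (GF \<alpha> \<sigma> z) t = (z / (1 + t * of_real \<alpha>) - of_real \<sigma> / of_real \<alpha>) * GF \<alpha> \<sigma> z t"
proof -
  have a0: "(of_real \<alpha> :: complex) \<noteq> 0" using assms by simp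
  note nz = ball_nonpos[OF assms]
  have a1: "\<alpha> \<noteq> 0" using assms by simp
  have "(GF \<alpha> \<sigma> z has_field_derivative
     ((z / (1 + t * of_real \<alpha>) - of_real \<sigma> / of_real \<alpha>) * GF \<alpha> \<sigma> z t)) (at t)"
    unfolding GF_def
    by (auto intro!: derivative_eq_intros has_field_derivative_Ln[THEN DERIV_chain2] simp: nz a0 a1 divide_inverse mult_ac)
  thus ?thesis by (metis DERIV_imp_deriv)
qed

lemma GF_rec_pt:
  fixes \<alpha> :: real and t :: complex
  assumes "\<alpha> > 0" "t \<in> ball 0 (1/\<alpha>)"
  shows "z * GF \<alpha> \<sigma> (z - of_real \<alpha>) t = deriv (GF \<alpha> \<sigma> z) t + of_real (\<sigma> / \<alpha>) * GF \<alpha> \<sigma> z t"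
proof -
  note nz = ball_nonpos[OF assms]
  have a0: "(of_real \<alpha> :: complex) \<noteq> 0" using assms by simp
  have "GF \<alpha> \<sigma> z t = (1 + t * of_real \<alpha>) * GF \<alpha> \<sigma> (z - of_real \<alpha>) t"
    using GF_shift[OF assms, of \<sigma> "z - of_real \<alpha>"] by (simp add: algebra_simps)
  hence "GF \<alpha> \<sigma> (z - of_real \<alpha>) t = GF \<alpha> \<sigma> z t / (1 + t * of_real \<alpha>)"
    using nz(2) by (simp add: field_simps)
  moreover have "\<And>G w (z::complex) c. z * (G / w) = (z / w - c) * G + c * G"
    by (simp add: algebra_simps)
  ultimately show ?thesis unfolding GF_deriv[OF assms] of_real_divide by metis
qed

lemma charlier_rec:
  assumes "\<alpha> > 0"
  shows "z * charlier \<alpha> \<sigma> n (z - of_real \<alpha>) =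
     charlier \<alpha> \<sigma> (Suc n) z + of_real (\<sigma> / \<alpha>) * charlier \<alpha> \<sigma> n z"
proof -
  let ?S = "ball (0::complex) (1/\<alpha>)"
  have o: "open ?S" and z0: "0 \<in> ?S" using assms by auto
  have h: "GF \<alpha> \<sigma> z holomorphic_on ?S" by (rule GF_hol[OF assms])
  have h1: "GF \<alpha> \<sigma> (z - of_real \<alpha>) holomorphic_on ?S" by (rule GF_hol[OF assms])
  have hd: "deriv (GF \<alpha> \<sigma> z) holomorphic_on ?S" by (rule holomorphic_deriv[OF h o])
  have "z * charlier \<alpha> \<sigma> n (z - of_real \<alpha>) = (deriv ^^ n) (\<lambda>t. z * GF \<alpha> \<sigma> (z - of_real \<alpha>) t) 0"
    unfolding charlier_GF by (rule higher_deriv_cmult[OF h1 z0 o, symmetric])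
  also have "\<dots> = (deriv ^^ n) (\<lambda>t. deriv (GF \<alpha> \<sigma> z) t + of_real (\<sigma> / \<alpha>) * GF \<alpha> \<sigma> z t) 0"
    by (rule higher_deriv_transform_within_open[OF _ _ o z0])
       (auto intro!: holomorphic_intros h h1 hd GF_rec_pt[OF assms] simp del: of_real_divide)
  also have "\<dots> = (deriv ^^ n) (deriv (GF \<alpha> \<sigma> z)) 0 + (deriv ^^ n) (\<lambda>t. of_real (\<sigma> / \<alpha>) * GF \<alpha> \<sigma> z t) 0"
    by (rule higher_deriv_add[OF hd _ o z0]) (intro holomorphic_intros h)
  also have "(deriv ^^ n) (\<lambda>t. of_real (\<sigma> / \<alpha>) * GF \<alpha> \<sigma> z t) 0 = of_real (\<sigma> / \<alpha>) * (deriv ^^ n) (GF \<alpha> \<sigma> z) 0"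
    by (rule higher_deriv_cmult[OF h z0 o])
  also have "(deriv ^^ n) (deriv (GF \<alpha> \<sigma> z)) 0 = (deriv ^^ Suc n) (GF \<alpha> \<sigma> z) 0"
    by (simp only: funpow_Suc_right o_def)
  finally show ?thesis unfolding charlier_GF .
qed



lemma Emin_bound:
  assumes "f \<in> Emin" "n \<ge> 1"
  shows "norm (f z) * exp (- norm z / real n) \<le> Emin_norm n f"
  unfolding Emin_norm_def
  by (rule cSUP_upper) (use assms in \<open>auto simp: Emin_def\<close>)

lemma Emin_norm_nonneg:
  assumes "f \<in> Emin" "n \<ge> 1"
  shows "0 \<le> Emin_norm n f"
  by (rule order_trans[OF _ Emin_bound[OF assms, of 0]]) simp

lemma Emin_pt:
  assumes "f \<in> Emin" "n \<ge> 1"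
  shows "norm (f z) \<le> Emin_norm n f * exp (norm z / real n)"
proof -
  have "norm (f z) = norm (f z) * exp (- norm z / real n) * exp (norm z / real n)"
    by (simp add: mult.assoc exp_minus field_simps)
  also have "\<dots> \<le> Emin_norm n f * exp (norm z / real n)"
    by (intro mult_right_mono Emin_bound[OF assms]) auto
  finally show ?thesis .
qed

lemma Emin_norm_le:
  assumes "\<And>z. norm (g z) * exp (- norm z / real n) \<le> B"
  shows "Emin_norm n g \<le> B"
  unfolding Emin_norm_def by (rule cSUP_least) (use assms in auto)

lemma EminI:
  assumes "g holomorphic_on UNIV"
    and "\<And>n::nat. n \<ge> 1 \<Longrightarrow> \<exists>B. \<forall>z. norm (g z) * exp (- norm z / real n) \<le> B"
  shows "g \<in> Emin"
  unfolding Emin_def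
proof (intro CollectI conjI allI impI assms(1))
  fix n :: nat assume "n \<ge> 1"
  then obtain B where "\<forall>z. norm (g z) * exp (- norm z / real n) \<le> B" using assms(2) by blast
  thus "bdd_above (range (\<lambda>z. norm (g z) * exp (- norm z / real n)))"
    by (intro bdd_aboveI2) auto
qed

lemma Emin_hol: "f \<in> Emin \<Longrightarrow> f holomorphic_on UNIV"
  by (simp add: Emin_def)

lemma Emin_add:
  assumes "f \<in> Emin" "g \<in> Emin"
  shows "(\<lambda>z. f z + g z) \<in> Emin"
proof (rule EminI)
  show "(\<lambda>z. f z + g z) holomorphic_on UNIV"
    using assms by (intro holomorphic_intros Emin_hol)
  fix n :: nat assume n: "n \<ge> 1"
  show "\<exists>B. \<forall>z. norm (f z + g z) * exp (- norm z / real n) \<le> B"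
  proof (intro exI allI)
    fix z
    have "norm (f z + g z) * exp (- norm z / real n)
       \<le> (norm (f z) + norm (g z)) * exp (- norm z / real n)"
      by (intro mult_right_mono norm_triangle_ineq) auto
    also have "\<dots> = norm (f z) * exp (- norm z / real n) + norm (g z) * exp (- norm z / real n)"
      by (simp add: algebra_simps)
    also have "\<dots> \<le> Emin_norm n f + Emin_norm n g"
      by (intro add_mono Emin_bound assms n)
    finally show "norm (f z + g z) * exp (- norm z / real n) \<le> Emin_norm n f + Emin_norm n g" .
  qed
qed

lemma Emin_cmult:
  assumes "f \<in> Emin"
  shows "(\<lambda>z. c * f z) \<in> Emin"
proof (rule EminI)
  show "(\<lambda>z. c * f z) holomorphic_on UNIV"
    using assms by (intro holomorphic_intros Emin_hol)
  fix n :: nat assume n: "n \<ge> 1"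
  show "\<exists>B. \<forall>z. norm (c * f z) * exp (- norm z / real n) \<le> B"
  proof (intro exI allI)
    fix z
    have "norm (c * f z) * exp (- norm z / real n) = norm c * (norm (f z) * exp (- norm z / real n))"
      by (simp add: norm_mult mult.assoc)
    also have "\<dots> \<le> norm c * Emin_norm n f"
      by (intro mult_left_mono Emin_bound assms n) auto
    finally show "norm (c * f z) * exp (- norm z / real n) \<le> norm c * Emin_norm n f" .
  qed
qed

lemma Emin_const: "(\<lambda>z. c) \<in> Emin"
proof (rule EminI)
  fix n :: nat assume n: "n \<ge> 1"
  show "\<exists>B. \<forall>z::complex. norm c * exp (- norm z / real n) \<le> B"
  proof (intro exI allI)
    fix z :: complex
    have "exp (- norm z / real n) \<le> 1" using n by simp
    thus "norm c * exp (- norm z / real n) \<le> norm c"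
      by (simp add: mult_left_le)
  qed
qed auto

lemma Emin_shift:
  assumes "f \<in> Emin"
  shows "(\<lambda>z. f (z + c)) \<in> Emin"
proof (rule EminI)
  show "(\<lambda>z. f (z + c)) holomorphic_on UNIV"
    by (rule holomorphic_on_compose_gen[of "\<lambda>z. z + c" UNIV f UNIV, unfolded o_def])
       (auto intro: holomorphic_intros Emin_hol[OF assms])
  fix n :: nat assume n: "n \<ge> 1"
  show "\<exists>B. \<forall>z. norm (f (z + c)) * exp (- norm z / real n) \<le> B"
  proof (intro exI allI)
    fix z
    have "norm (z + c) \<le> norm z + norm c" by (rule norm_triangle_ineq)
    hence "- norm z / real n \<le> - norm (z + c) / real n + norm c / real n"
      using n by (simp add: field_simps)
    hence "exp (- norm z / real n) \<le> exp (- norm (z + c) / real n) * exp (norm c / real n)"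
      by (simp add: exp_add[symmetric])
    hence "norm (f (z + c)) * exp (- norm z / real n) \<le>
          norm (f (z + c)) * (exp (- norm (z + c) / real n) * exp (norm c / real n))"
      by (intro mult_left_mono) auto
    also have "\<dots> = (norm (f (z + c)) * exp (- norm (z + c) / real n)) * exp (norm c / real n)"
      by (simp add: mult.assoc)
    also have "\<dots> \<le> Emin_norm n f * exp (norm c / real n)"
      by (intro mult_right_mono Emin_bound assms n) auto
    finally show "norm (f (z + c)) * exp (- norm z / real n) \<le> Emin_norm n f * exp (norm c / real n)" .
  qed
qed

lemma x_exp_bound:
  assumes "x \<ge> 0" "m > (0::real)"
  shows "x * exp (- x / m) \<le> m"
proof -
  have "1 + x / m \<le> exp (x / m)" by (rule exp_ge_add_one_self)
  hence "x / m \<le> exp (x / m)" by linarith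
  hence "x \<le> m * exp (x / m)" using assms by (simp add: field_simps)
  hence "x * exp (- x / m) \<le> m * exp (x / m) * exp (- x / m)"
    by (intro mult_right_mono) auto
  also have "\<dots> = m" by (simp add: mult.assoc exp_add[symmetric])
  finally show ?thesis .
qed

lemma Emin_mult_z:
  assumes "f \<in> Emin"
  shows "(\<lambda>z. z * f z) \<in> Emin"
proof (rule EminI)
  show "(\<lambda>z. z * f z) holomorphic_on UNIV"
    using assms by (intro holomorphic_intros Emin_hol)
  fix n :: nat assume n: "n \<ge> 1"
  show "\<exists>B. \<forall>z. norm (z * f z) * exp (- norm z / real n) \<le> B"
  proof (intro exI allI)
    fix z :: complex
    have n2: "2 * n \<ge> 1" using n by simp
    have e: "exp (- norm z / real n) = exp (- norm z / real (2*n)) * exp (- norm z / real (2*n))"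
      using n by (simp add: exp_add[symmetric] field_simps)
    have "norm (z * f z) * exp (- norm z / real n) =
        (norm z * exp (- norm z / real (2*n))) * (norm (f z) * exp (- norm z / real (2*n)))"
      unfolding e by (simp add: norm_mult mult_ac)
    also have "\<dots> \<le> real (2*n) * Emin_norm (2*n) f"
      by (intro mult_mono x_exp_bound Emin_bound[OF assms n2]) (use n in auto)
    finally show "norm (z * f z) * exp (- norm z / real n) \<le> real (2*n) * Emin_norm (2*n) f" .
  qed
qed



inductive inS :: "real \<Rightarrow> real \<Rightarrow> (complex \<Rightarrow> complex) \<Rightarrow> bool" for \<alpha> \<sigma> where
  inS0: "inS \<alpha> \<sigma> (\<lambda>z. 0)"
| inSstep: "inS \<alpha> \<sigma> g \<Longrightarrow> inS \<alpha> \<sigma> (\<lambda>z. g z + c * charlier \<alpha> \<sigma> k z)"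

lemma inS_add:
  assumes "inS \<alpha> \<sigma> g" "inS \<alpha> \<sigma> h"
  shows "inS \<alpha> \<sigma> (\<lambda>z. g z + h z)"
  using assms(2)
proof (induction h)
  case inS0 thus ?case using assms(1) by simp
next
  case (inSstep h c k)
  have "inS \<alpha> \<sigma> (\<lambda>z. (g z + h z) + c * charlier \<alpha> \<sigma> k z)" by (rule inS.inSstep[OF inSstep.IH])
  thus ?case by (simp add: add.assoc)
qed

lemma inS_cmult:
  assumes "inS \<alpha> \<sigma> g"
  shows "inS \<alpha> \<sigma> (\<lambda>z. c * g z)"
  using assms
proof (induction g)
  case inS0 thus ?case by (simp add: inS.inS0)
next
  case (inSstep g d k)
  have "inS \<alpha> \<sigma> (\<lambda>z. c * g z + (c * d) * charlier \<alpha> \<sigma> k z)" by (rule inS.inSstep[OF inSstep.IH])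
  thus ?case by (simp add: algebra_simps)
qed

lemma inS_ch: "inS \<alpha> \<sigma> (charlier \<alpha> \<sigma> k)"
  using inS.inSstep[OF inS.inS0, of \<alpha> \<sigma> 1 k] by simp

lemma charlier_Emin:
  assumes "\<alpha> > 0"
  shows "charlier \<alpha> \<sigma> k \<in> Emin"
proof (induction k)
  case 0
  have "charlier \<alpha> \<sigma> 0 = (\<lambda>z. 1)" by (simp add: charlier_0 fun_eq_iff)
  thus ?case using Emin_const by simp
next
  case (Suc k)
  have "charlier \<alpha> \<sigma> (Suc k) = (\<lambda>z. z * charlier \<alpha> \<sigma> k (z + - of_real \<alpha>) + (- of_real (\<sigma> / \<alpha>)) * charlier \<alpha> \<sigma> k z)"
    using charlier_rec[OF assms, of _ \<sigma> k] by (auto simp: fun_eq_iff algebra_simps)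
  also have "\<dots> \<in> Emin"
    by (intro Emin_add Emin_mult_z Emin_shift Emin_cmult Suc)
  finally show ?case .
qed

lemma inS_Emin:
  assumes "\<alpha> > 0" "inS \<alpha> \<sigma> g"
  shows "g \<in> Emin"
  using assms(2)
  by induction (auto intro!: Emin_add Emin_cmult charlier_Emin assms(1) Emin_const)

lemma inS_shift:
  assumes "\<alpha> > 0" "inS \<alpha> \<sigma> g"
  shows "inS \<alpha> \<sigma> (\<lambda>z. g (z + of_real \<alpha>))"
  using assms(2)
proof induction
  case inS0 thus ?case by (simp add: inS.inS0)
next
  case (inSstep g c k)
  have "inS \<alpha> \<sigma> (\<lambda>z. (g (z + of_real \<alpha>) + (c * of_real \<alpha> * of_nat k) * charlier \<alpha> \<sigma> (k - 1) z) + c * charlier \<alpha> \<sigma> k z)"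
    by (intro inS.inSstep inSstep.IH)
  thus ?case by (simp add: charlier_shift[OF assms(1)] algebra_simps)
qed

lemma inS_zshift:
  assumes "\<alpha> > 0" "inS \<alpha> \<sigma> g"
  shows "inS \<alpha> \<sigma> (\<lambda>z. z * g (z - of_real \<alpha>))"
  using assms(2)
proof induction
  case inS0 thus ?case by (simp add: inS.inS0)
next
  case (inSstep g c k)
  have "inS \<alpha> \<sigma> (\<lambda>z. (z * g (z - of_real \<alpha>) + c * charlier \<alpha> \<sigma> (Suc k) z) + (c * of_real (\<sigma> / \<alpha>)) * charlier \<alpha> \<sigma> k z)"
    by (intro inS.inSstep inSstep.IH)
  moreover have "\<And>z. z * (g (z - of_real \<alpha>) + c * charlier \<alpha> \<sigma> k (z - of_real \<alpha>)) =
      (z * g (z - of_real \<alpha>) + c * charlier \<alpha> \<sigma> (Suc k) z) + (c * of_real (\<sigma> / \<alpha>)) * charlier \<alpha> \<sigma> k z"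
  proof -
    fix z :: complex
    have "z * (g (z - of_real \<alpha>) + c * charlier \<alpha> \<sigma> k (z - of_real \<alpha>)) =
       z * g (z - of_real \<alpha>) + c * (z * charlier \<alpha> \<sigma> k (z - of_real \<alpha>))" by (simp add: algebra_simps)
    also note charlier_rec[OF assms(1)]
    finally show "z * (g (z - of_real \<alpha>) + c * charlier \<alpha> \<sigma> k (z - of_real \<alpha>)) =
      (z * g (z - of_real \<alpha>) + c * charlier \<alpha> \<sigma> (Suc k) z) + (c * of_real (\<sigma> / \<alpha>)) * charlier \<alpha> \<sigma> k z"
      by (simp add: algebra_simps)
  qed
  ultimately show ?case by simp
qed

lemma inS_mult_z:
  assumes "\<alpha> > 0" "inS \<alpha> \<sigma> g"
  shows "inS \<alpha> \<sigma> (\<lambda>z. z * g z)"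
  using inS_zshift[OF assms(1) inS_shift[OF assms]] by simp

lemma inS_pow:
  assumes "\<alpha> > 0"
  shows "inS \<alpha> \<sigma> (\<lambda>z. z ^ k)"
proof (induction k)
  case 0
  have "charlier \<alpha> \<sigma> 0 = (\<lambda>z. 1)" by (simp add: charlier_0 fun_eq_iff)
  thus ?case using inS_ch[of \<alpha> \<sigma> 0] by simp
next
  case (Suc k)
  thus ?case using inS_mult_z[OF assms Suc] by simp
qed

lemma inS_poly:
  assumes "\<alpha> > 0"
  shows "inS \<alpha> \<sigma> (\<lambda>z. \<Sum>i<N. b i * z ^ i)"
proof (induction N)
  case 0 thus ?case by (simp add: inS.inS0)
next
  case (Suc N)
  thus ?case using inS_add[OF Suc inS_cmult[OF inS_pow[OF assms], where c="b N"]] by simp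
qed

lemma lin_add:
  "Emin_cont_linear T \<Longrightarrow> f \<in> Emin \<Longrightarrow> g \<in> Emin \<Longrightarrow> T (\<lambda>z. f z + g z) = (\<lambda>z. T f z + T g z)"
  unfolding Emin_cont_linear_def by blast

lemma lin_cmult:
  "Emin_cont_linear T \<Longrightarrow> f \<in> Emin \<Longrightarrow> T (\<lambda>z. c * f z) = (\<lambda>z. c * T f z)"
  unfolding Emin_cont_linear_def by blast

lemma lin_mem:
  "Emin_cont_linear T \<Longrightarrow> f \<in> Emin \<Longrightarrow> T f \<in> Emin"
  unfolding Emin_cont_linear_def by blast

lemma T_inS:
  assumes T: "Emin_cont_linear T" and al: "\<alpha> > 0"
    and Tch: "\<And>k. T (charlier \<alpha> \<sigma> k) = (\<lambda>z. m z * charlier \<alpha> \<sigma> k (h z))"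
    and g: "inS \<alpha> \<sigma> g"
  shows "T g = (\<lambda>z. m z * g (h z))"
  using g
proof induction
  case inS0
  have chE: "charlier \<alpha> \<sigma> 0 \<in> Emin" by (rule charlier_Emin[OF al])
  have "T (\<lambda>z. 0) = T (\<lambda>z. 0 * charlier \<alpha> \<sigma> 0 z)" by simp
  also have "\<dots> = (\<lambda>z. 0 * T (charlier \<alpha> \<sigma> 0) z)"
    by (rule lin_cmult[OF T chE])
  finally show ?case by simp
next
  case (inSstep g c k)
  have gE: "g \<in> Emin" by (rule inS_Emin[OF al inSstep.hyps])
  have chE: "charlier \<alpha> \<sigma> k \<in> Emin" by (rule charlier_Emin[OF al])
  have cE: "(\<lambda>z. c * charlier \<alpha> \<sigma> k z) \<in> Emin" by (rule Emin_cmult[OF chE])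
  have "T (\<lambda>z. g z + c * charlier \<alpha> \<sigma> k z) = (\<lambda>z. T g z + T (\<lambda>z. c * charlier \<alpha> \<sigma> k z) z)"
    by (rule lin_add[OF T gE cE])
  also have "T (\<lambda>z. c * charlier \<alpha> \<sigma> k z) = (\<lambda>z. c * T (charlier \<alpha> \<sigma> k) z)"
    by (rule lin_cmult[OF T chE])
  finally show ?case using inSstep.IH Tch by (simp add: algebra_simps)
qed



definition tc :: "(complex \<Rightarrow> complex) \<Rightarrow> nat \<Rightarrow> complex" where
  "tc f k = (deriv ^^ k) f 0 / fact k"

definition TP :: "(complex \<Rightarrow> complex) \<Rightarrow> nat \<Rightarrow> complex \<Rightarrow> complex" where
  "TP f N = (\<lambda>z. \<Sum>k<N. tc f k * z ^ k)"

lemma taylor_sums: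
  assumes "f \<in> Emin"
  shows "(\<lambda>k. tc f k * w ^ k) sums f w"
proof -
  have "f holomorphic_on ball 0 (norm w + 1)"
    using Emin_hol[OF assms] by (rule holomorphic_on_subset) auto
  from holomorphic_power_series[OF this, of w] show ?thesis by (simp add: tc_def)
qed

lemma coeff_bound:
  assumes "f \<in> Emin" "m \<ge> 1" "R > 0"
  shows "norm (tc f k) \<le> Emin_norm (2*m) f * exp (R / real (2*m)) / R ^ k"
proof -
  have m2: "2*m \<ge> 1" using assms by simp
  have hol: "f holomorphic_on UNIV" by (rule Emin_hol[OF assms(1)])
  have "norm ((deriv ^^ k) f 0) \<le> fact k * (Emin_norm (2*m) f * exp (R / real (2*m))) / R ^ k"
  proof (rule Cauchy_inequality)
    show "f holomorphic_on ball 0 R" using hol by (rule holomorphic_on_subset) auto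
    show "continuous_on (cball 0 R) f"
      using holomorphic_on_imp_continuous_on[OF hol] by (rule continuous_on_subset) auto
    show "0 < R" by fact
    fix x :: complex assume "norm (0 - x) = R"
    hence "norm x = R" by simp
    thus "norm (f x) \<le> Emin_norm (2*m) f * exp (R / real (2*m))"
      using Emin_pt[OF assms(1) m2, of x] by simp
  qed
  hence "norm ((deriv ^^ k) f 0) / fact k \<le> (fact k * (Emin_norm (2*m) f * exp (R / real (2*m))) / R ^ k) / fact k"
    by (intro divide_right_mono) auto
  moreover have "norm (tc f k) = norm ((deriv ^^ k) f 0) / fact k" by (simp add: tc_def norm_divide)
  ultimately show ?thesis by simp
qed

lemma term_bound:
  assumes "f \<in> Emin" "m \<ge> 1"
  shows "norm (tc f k * z ^ k) \<le> Emin_norm (2*m) f * exp (norm z / real m) * (1/2) ^ k"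
proof (cases "z = 0")
  case True
  have m2: "2*m \<ge> 1" using assms by simp
  have M0: "0 \<le> Emin_norm (2*m) f" by (rule Emin_norm_nonneg[OF assms(1) m2])
  show ?thesis
  proof (cases k)
    case 0
    have "norm (f 0) \<le> Emin_norm (2*m) f" using Emin_pt[OF assms(1) m2, of 0] by simp
    thus ?thesis using True 0 by (simp add: tc_def)
  next
    case (Suc j)
    thus ?thesis using True M0 by simp
  qed
next
  case False
  define R where "R = 2 * norm z"
  have R: "R > 0" using False by (simp add: R_def)
  have "norm (tc f k * z ^ k) = norm (tc f k) * norm z ^ k" by (simp add: norm_mult norm_power)
  also have "\<dots> \<le> Emin_norm (2*m) f * exp (R / real (2*m)) / R ^ k * norm z ^ k"
    by (intro mult_right_mono coeff_bound[OF assms R]) auto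
  also have "\<dots> = Emin_norm (2*m) f * exp (norm z / real m) * (norm z / R) ^ k"
  proof -
    have e: "exp (R / real (2*m)) = exp (norm z / real m)" unfolding R_def by simp
    show ?thesis unfolding e using R by (simp add: power_divide)
  qed
  also have "norm z / R = 1/2" using False by (simp add: R_def)
  finally show ?thesis .
qed

lemma tail_bound:
  assumes "f \<in> Emin" "m \<ge> 1"
  shows "norm (f z - TP f N z) \<le> 2 * Emin_norm (2*m) f * exp (norm z / real m) * (1/2) ^ N"
proof -
  define K where "K = Emin_norm (2*m) f * exp (norm z / real m)"
  define t where "t = (\<lambda>k. tc f k * z ^ k)"
  have s: "(\<lambda>i. t (i + N)) sums (f z - TP f N z)"
    unfolding TP_def t_def by (rule sums_split_initial_segment[OF taylor_sums[OF assms(1)]])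
  define g where "g = (\<lambda>i. K * (1/2)^N * (1/2::real) ^ i)"
  have gs: "g sums (K * (1/2)^N * 2)"
    unfolding g_def using sums_mult[OF geometric_sums[of "1/2::real"], of "K * (1/2)^N"] by simp
  have tb: "norm (t (i + N)) \<le> g i" for i
    using term_bound[OF assms, of "i + N" z] by (simp add: t_def g_def K_def power_add mult_ac)
  have sn: "summable (\<lambda>i. norm (t (i + N)))"
    by (rule summable_comparison_test[OF _ sums_summable[OF gs]]) (use tb in auto)
  have "norm (f z - TP f N z) = norm (\<Sum>i. t (i + N))" using sums_unique[OF s] by simp
  also have "\<dots> \<le> (\<Sum>i. norm (t (i + N)))" by (rule summable_norm[OF sn])
  also have "\<dots> \<le> (\<Sum>i. g i)" by (rule suminf_le[OF tb sn sums_summable[OF gs]])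
  also have "\<dots> = K * (1/2)^N * 2" using sums_unique[OF gs] by simp
  finally show ?thesis by (simp add: K_def mult_ac)
qed

lemma tail_norm:
  assumes "f \<in> Emin" "m \<ge> 1"
  shows "Emin_norm m (\<lambda>z. f z - TP f N z) \<le> 2 * Emin_norm (2*m) f * (1/2) ^ N"
proof (rule Emin_norm_le)
  fix z :: complex
  have "norm (f z - TP f N z) * exp (- norm z / real m)
     \<le> (2 * Emin_norm (2*m) f * exp (norm z / real m) * (1/2) ^ N) * exp (- norm z / real m)"
    by (intro mult_right_mono tail_bound[OF assms]) auto
  also have "\<dots> = 2 * Emin_norm (2*m) f * (1/2) ^ N * (exp (norm z / real m) * exp (- norm z / real m))"
    by (simp add: mult_ac)
  also have "exp (norm z / real m) * exp (- norm z / real m) = 1"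
    by (simp add: exp_add[symmetric])
  finally show "norm (f z - TP f N z) * exp (- norm z / real m) \<le> 2 * Emin_norm (2*m) f * (1/2) ^ N"
    by simp
qed

lemma T_ext:
  assumes T: "Emin_cont_linear T" and al: "\<alpha> > 0"
    and Tch: "\<And>k. T (charlier \<alpha> \<sigma> k) = (\<lambda>z. mu z * charlier \<alpha> \<sigma> k (h z))"
    and f: "f \<in> Emin"
  shows "T f z = mu z * f (h z)"
proof -
  obtain m C where m: "m \<ge> 1" and C: "\<forall>g\<in>Emin. Emin_norm 1 (T g) \<le> C * Emin_norm m g"
    using T unfolding Emin_cont_linear_def by auto
  define M where "M = Emin_norm (2*m) f"
  have PE: "TP f N \<in> Emin" for N
    unfolding TP_def by (rule inS_Emin[OF al inS_poly[OF al]])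
  have DE: "(\<lambda>z. f z - TP f N z) \<in> Emin" for N
    using Emin_add[OF f Emin_cmult[OF PE, of "-1" N]] by simp
  have TP: "T (TP f N) = (\<lambda>z. mu z * TP f N (h z))" for N
    unfolding TP_def by (rule T_inS[OF T al Tch inS_poly[OF al]])
  have eq: "mu z * TP f N (h z) = T f z - T (\<lambda>z. f z - TP f N z) z" for N
  proof -
    have "f = (\<lambda>z. TP f N z + (f z - TP f N z))" by simp
    hence "T f = T (\<lambda>z. TP f N z + (f z - TP f N z))" by simp
    also have "\<dots> = (\<lambda>w. T (TP f N) w + T (\<lambda>z. f z - TP f N z) w)"
      by (rule lin_add[OF T PE DE])
    finally show ?thesis using TP by simp
  qed
  have bnd: "norm (T (\<lambda>z. f z - TP f N z) z) \<le> (\<bar>C\<bar> * (2 * M) * exp (norm z)) * (1/2) ^ N" for N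
  proof -
    have TE: "T (\<lambda>z. f z - TP f N z) \<in> Emin" by (rule lin_mem[OF T DE])
    have n0: "0 \<le> Emin_norm m (\<lambda>z. f z - TP f N z)" by (rule Emin_norm_nonneg[OF DE m])
    have "norm (T (\<lambda>z. f z - TP f N z) z) \<le> Emin_norm 1 (T (\<lambda>z. f z - TP f N z)) * exp (norm z / real 1)"
      by (rule Emin_pt[OF TE]) simp
    also have "Emin_norm 1 (T (\<lambda>z. f z - TP f N z)) \<le> \<bar>C\<bar> * Emin_norm m (\<lambda>z. f z - TP f N z)"
    proof -
      have "Emin_norm 1 (T (\<lambda>z. f z - TP f N z)) \<le> C * Emin_norm m (\<lambda>z. f z - TP f N z)"
        using C DE by blast
      also have "\<dots> \<le> \<bar>C\<bar> * Emin_norm m (\<lambda>z. f z - TP f N z)"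
        by (intro mult_right_mono n0) auto
      finally show ?thesis .
    qed
    also have "\<dots> \<le> \<bar>C\<bar> * (2 * M * (1/2) ^ N)"
      unfolding M_def by (intro mult_left_mono tail_norm[OF f m]) auto
    finally show ?thesis by (simp add: mult_ac)
  qed
  have lim0: "(\<lambda>N. T (\<lambda>z. f z - TP f N z) z) \<longlonglongrightarrow> 0"
  proof (rule Lim_null_comparison)
    show "\<forall>\<^sub>F N in sequentially. norm (T (\<lambda>z. f z - TP f N z) z) \<le> (\<bar>C\<bar> * (2 * M) * exp (norm z)) * (1/2) ^ N"
      using bnd by simp
    show "(\<lambda>N. (\<bar>C\<bar> * (2 * M) * exp (norm z)) * (1/2::real) ^ N) \<longlonglongrightarrow> 0"
      using tendsto_mult[OF tendsto_const LIMSEQ_power_zero[of "1/2::real"]] by simp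
  qed
  have l1: "(\<lambda>N. mu z * TP f N (h z)) \<longlonglongrightarrow> T f z - 0"
    unfolding eq by (intro tendsto_diff tendsto_const lim0)
  have l2: "(\<lambda>N. mu z * TP f N (h z)) \<longlonglongrightarrow> mu z * f (h z)"
    using taylor_sums[OF f, of "h z"] unfolding sums_def TP_def
    by (intro tendsto_mult tendsto_const) simp
  show ?thesis using LIMSEQ_unique[OF l1 l2] by simp
qed


theorem proposition5p2:
  fixes \<alpha> \<sigma> :: real
    and U V :: "(complex \<Rightarrow> complex) \<Rightarrow> (complex \<Rightarrow> complex)"
  assumes "\<alpha> > 0" and "\<sigma> > 0"
    and "Emin_cont_linear U"
    and "\<And>n. U (charlier \<alpha> \<sigma> n) =
               (\<lambda>z. charlier \<alpha> \<sigma> (Suc n) z + of_real (\<sigma> / \<alpha>) * charlier \<alpha> \<sigma> n z)"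
    and "Emin_cont_linear V"
    and "\<And>n. V (charlier \<alpha> \<sigma> n) =
               (\<lambda>z. of_real \<alpha> * of_nat n * charlier \<alpha> \<sigma> (n - 1) z + charlier \<alpha> \<sigma> n z)"
  shows "\<forall>f\<in>Emin. \<forall>z. U f z = z * f (z - of_real \<alpha>) \<and> V f z = f (z + of_real \<alpha>)"
proof (intro ballI allI conjI)
  fix f z assume f: "f \<in> Emin"
  have Uch: "U (charlier \<alpha> \<sigma> k) = (\<lambda>z. z * charlier \<alpha> \<sigma> k (z - of_real \<alpha>))" for k
    using assms(4)[of k] charlier_rec[OF assms(1), of _ \<sigma> k] by simp
  have Vch: "V (charlier \<alpha> \<sigma> k) = (\<lambda>z. 1 * charlier \<alpha> \<sigma> k (z + of_real \<alpha>))" for k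
    using assms(6)[of k] charlier_shift[OF assms(1), of \<sigma> k] by simp
  show "U f z = z * f (z - of_real \<alpha>)"
    by (rule T_ext[OF assms(3) assms(1) Uch f])
  show "V f z = f (z + of_real \<alpha>)"
    using T_ext[OF assms(5) assms(1) Vch f] by simp
qed

end
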